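(* Let $H$ be a subgroup of $B_\infty(D)$ such that $P_\infty(D)\subsetneq H\subset B_\infty(D)$. Then $H$ is not bi-orderable.
   Context: $B_n(D)$ is the Artin braid group on $n$ strands, with generators $\sigma_1,\dots,\sigma_{n-1}$ and relations $\sigma_i\sigma_j=\sigma_j\sigma_i$ for $|i-j|\ge 2$ and $\sigma_i\sigma_{i+1}\sigma_i=\sigma_{i+1}\sigma_i\sigma_{i+1}$; $P_n(D)$ is the kernel of the permutation homomorphism $B_n(D)\to S_n$, $\sigma_i\mapsto(i,i+1)$. The infinite braid group $B_\infty(D)$ is the direct limit of the groups $B_n(D)$ under the injective homomorphisms $\iota: B_n(D)\to B_{n+1}(D)$, $\iota(\sigma_i)=\sigma_i$; $P_\infty(D)$ is the direct limit of the $P_n(D)$ under the restrictions of $\iota$ (equivalently, the kernel of the induced permutation homomorphism from $B_\infty(D)$ to the group of finitely supported permutations of the positive integers). A group is bi-orderable if it admits a strict total ordering invariant under both left and right multiplication. *)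

theory Defs
  imports "HOL-Algebra.Group"
begin

text \<open>Braid words: a letter (i, True) stands for the Artin generator sigma_(i+1),
  and (i, False) for its inverse (0-based indexing of generators, so letter i acts
  on strands i and i+1, counted from 0).\<close>

type_synonym braid_word = "(nat \<times> bool) list"

inductive braid_eq :: "braid_word \<Rightarrow> braid_word \<Rightarrow> bool" where
  be_refl: "braid_eq u u"
| be_sym: "braid_eq u v \<Longrightarrow> braid_eq v u"
| be_trans: "braid_eq u v \<Longrightarrow> braid_eq v w \<Longrightarrow> braid_eq u w"
| be_cong: "braid_eq u v \<Longrightarrow> braid_eq (x @ u @ y) (x @ v @ y)"
| be_inv: "braid_eq [(i, b), (i, \<not> b)] []"
| be_comm: "i + 2 \<le> j \<Longrightarrow> braid_eq [(i, True), (j, True)] [(j, True), (i, True)]"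
| be_braid: "braid_eq [(i, True), (Suc i, True), (i, True)]
                      [(Suc i, True), (i, True), (Suc i, True)]"

definition braid_rel :: "braid_word rel" where
  "braid_rel = {(u, v). braid_eq u v}"

definition braid_group :: "braid_word set monoid" where
  "braid_group = \<lparr> carrier = UNIV // braid_rel,
      monoid.mult = (\<lambda>A B. braid_rel `` {u @ v | u v. u \<in> A \<and> v \<in> B}),
      one = braid_rel `` {[]} \<rparr>"

definition perm_gen :: "nat \<Rightarrow> nat \<Rightarrow> nat" where
  "perm_gen i = (\<lambda>k. if k = i then Suc i else if k = Suc i then i else k)"

fun perm_of :: "braid_word \<Rightarrow> nat \<Rightarrow> nat" where
  "perm_of [] = id"
| "perm_of (x # w) = perm_gen (fst x) \<circ> perm_of w"

definition pure_braids :: "braid_word set set" where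
  "pure_braids = {c \<in> carrier braid_group. \<forall>w \<in> c. perm_of w = id}"

definition bi_orderable :: "('a, 'b) monoid_scheme \<Rightarrow> bool" where
  "bi_orderable G \<longleftrightarrow> (\<exists>less :: 'a \<Rightarrow> 'a \<Rightarrow> bool.
      (\<forall>a \<in> carrier G. \<not> less a a) \<and>
      (\<forall>a \<in> carrier G. \<forall>b \<in> carrier G. \<forall>c \<in> carrier G. less a b \<longrightarrow> less b c \<longrightarrow> less a c) \<and>
      (\<forall>a \<in> carrier G. \<forall>b \<in> carrier G. a \<noteq> b \<longrightarrow> less a b \<or> less b a) \<and>
      (\<forall>a \<in> carrier G. \<forall>b \<in> carrier G. \<forall>c \<in> carrier G. less a b \<longrightarrow>
          less (c \<otimes>\<^bsub>G\<^esub> a) (c \<otimes>\<^bsub>G\<^esub> b) \<and> less (a \<otimes>\<^bsub>G\<^esub> c) (b \<otimes>\<^bsub>G\<^esub> c)))"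

end

theory Submission
  imports Defs "HOL-Combinatorics.Cycles" "HOL-Computational_Algebra.Primes"
begin

lemma perm_gen_transpose: "perm_gen i = transpose i (Suc i)"
  by (auto simp: perm_gen_def transpose_def fun_eq_iff)

lemma be_app: "braid_eq u u' \<Longrightarrow> braid_eq v v' \<Longrightarrow> braid_eq (u @ v) (u' @ v')"
proof -
  assume a: "braid_eq u u'" and b: "braid_eq v v'"
  have "braid_eq ([] @ u @ v) ([] @ u' @ v)" by (rule be_cong[OF a])
  moreover have "braid_eq (u' @ v @ []) (u' @ v' @ [])" by (rule be_cong[OF b])
  ultimately show ?thesis using be_trans by simp
qed

lemma be_app3: "braid_eq u u' \<Longrightarrow> braid_eq (x @ u @ y) (x @ u' @ y)"
  by (rule be_cong)

definition invw :: "braid_word \<Rightarrow> braid_word" where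
  "invw w = rev (map (\<lambda>(i,b). (i, \<not> b)) w)"

lemma invw_simps[simp]: "invw [] = []" "invw (x # w) = invw w @ [(fst x, \<not> snd x)]"
  "invw (u @ v) = invw v @ invw u"
  by (auto simp: invw_def case_prod_beta)

lemma inv_right: "braid_eq (w @ invw w) []"
proof (induction w)
  case Nil then show ?case by (simp add: be_refl)
next
  case (Cons x w)
  obtain i b where x: "x = (i,b)" by (cases x)
  have "braid_eq ([x] @ (w @ invw w) @ [(i, \<not> b)]) ([x] @ [] @ [(i, \<not> b)])"
    by (rule be_cong[OF Cons.IH])
  moreover have "braid_eq ([x] @ [] @ [(i, \<not> b)]) []" using be_inv[of i b] x by simp
  ultimately show ?case using x be_trans by auto
qed

lemma inv_left: "braid_eq (invw w @ w) []"
proof (induction w)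
  case Nil then show ?case by (simp add: be_refl)
next
  case (Cons x w)
  obtain i b where x: "x = (i,b)" by (cases x)
  have "braid_eq (invw w @ [(i, \<not> b), (i, \<not>\<not> b)] @ w) (invw w @ [] @ w)"
    by (rule be_cong[OF be_inv])
  then have "braid_eq (invw (x # w) @ (x # w)) (invw w @ w)" using x by simp
  then show ?case using Cons.IH be_trans by blast
qed

lemma perm_of_append[simp]: "perm_of (u @ v) = perm_of u \<circ> perm_of v"
  by (induction u) auto

lemma perm_gen_inv[simp]: "perm_gen i (perm_gen i a) = a"
  by (auto simp: perm_gen_def)

lemma perm_of_inv: "braid_eq u v \<Longrightarrow> perm_of u = perm_of v"
proof (induction rule: braid_eq.induct)
  case (be_inv i b) then show ?case by (auto simp: fun_eq_iff)
next
  case (be_comm i j) then show ?case by (auto simp: fun_eq_iff perm_gen_def)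
next
  case (be_braid i) then show ?case by (auto simp: fun_eq_iff perm_gen_def)
qed auto

lemma permutation_perm_of: "permutation (perm_of w)"
proof (induction w)
  case (Cons x w)
  show ?case unfolding perm_of.simps perm_gen_transpose
    by (rule permutation_compose[OF permutation_swap_id Cons.IH])
qed simp

lemma perm_of_invw_left: "perm_of (invw w) \<circ> perm_of w = id"
  using perm_of_inv[OF inv_left[of w]] by simp
lemma perm_of_invw_right: "perm_of w \<circ> perm_of (invw w) = id"
  using perm_of_inv[OF inv_right[of w]] by simp

definition cls :: "braid_word \<Rightarrow> braid_word set" where
  "cls w = braid_rel `` {w}"

lemma mem_cls: "v \<in> cls u \<longleftrightarrow> braid_eq u v"
  by (simp add: cls_def braid_rel_def)

lemma cls_eq: "cls u = cls v \<longleftrightarrow> braid_eq u v"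
proof
  assume "cls u = cls v"
  then have "v \<in> cls u" using mem_cls be_refl by blast
  then show "braid_eq u v" by (simp add: mem_cls)
next
  assume "braid_eq u v"
  then show "cls u = cls v" unfolding set_eq_iff mem_cls
    by (meson be_sym be_trans)
qed

lemma carrier_iff: "c \<in> carrier braid_group \<longleftrightarrow> (\<exists>w. c = cls w)"
  by (auto simp: braid_group_def quotient_def cls_def)

lemma one_cls: "\<one>\<^bsub>braid_group\<^esub> = cls []"
  by (simp add: braid_group_def cls_def)

lemma mult_cls: "cls u \<otimes>\<^bsub>braid_group\<^esub> cls v = cls (u @ v)"
proof -
  have "braid_rel `` {u' @ v' | u' v'. u' \<in> cls u \<and> v' \<in> cls v} = cls (u @ v)"
  proof -
    { fix z
    have "z \<in> braid_rel `` {u' @ v' | u' v'. u' \<in> cls u \<and> v' \<in> cls v} \<longleftrightarrow> z \<in> cls (u @ v)"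
    proof
      assume "z \<in> braid_rel `` {u' @ v' | u' v'. u' \<in> cls u \<and> v' \<in> cls v}"
      then obtain u' v' where "braid_eq u u'" "braid_eq v v'" "braid_eq (u' @ v') z"
        by (auto simp: braid_rel_def mem_cls)
      then show "z \<in> cls (u @ v)" by (meson be_app be_trans mem_cls)
    next
      assume "z \<in> cls (u @ v)"
      then show "z \<in> braid_rel `` {u' @ v' | u' v'. u' \<in> cls u \<and> v' \<in> cls v}"
        by (auto simp: braid_rel_def mem_cls intro: be_refl)
    qed }
    then show ?thesis by blast
  qed
  then show ?thesis by (simp add: braid_group_def cls_def)
qed

fun Lp :: "braid_word \<Rightarrow> nat \<Rightarrow> nat" where
  "Lp [] = id"
| "Lp (x # w) = Lp w \<circ> perm_gen (fst x)"

fun lk :: "nat \<Rightarrow> nat \<Rightarrow> braid_word \<Rightarrow> int" where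
  "lk a b [] = 0"
| "lk a b (x # w) = (if (a = fst x \<and> b = Suc (fst x)) \<or> (a = Suc (fst x) \<and> b = fst x)
      then (if snd x then 1 else -1) else 0) + lk (perm_gen (fst x) a) (perm_gen (fst x) b) w"

lemma lk_append: "lk a b (u @ v) = lk a b u + lk (Lp u a) (Lp u b) v"
  by (induction u arbitrary: a b) auto

lemma Lp_perm: "perm_of u \<circ> Lp u = id" "Lp u \<circ> perm_of u = id"
  by (induction u) (auto simp: fun_eq_iff)

lemma Lp_inv: "perm_of u = perm_of v \<Longrightarrow> Lp u = Lp v"
proof -
  assume "perm_of u = perm_of v"
  have "Lp u = Lp u \<circ> (perm_of v \<circ> Lp v)" using Lp_perm(1)[of v] by simp
  also have "\<dots> = (Lp u \<circ> perm_of u) \<circ> Lp v" using \<open>perm_of u = perm_of v\<close> by (simp add: o_assoc)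
  also have "\<dots> = Lp v" using Lp_perm(2)[of u] by simp
  finally show ?thesis .
qed

lemma lk_inv: "braid_eq u v \<Longrightarrow> lk a b u = lk a b v"
proof (induction arbitrary: a b rule: braid_eq.induct)
  case (be_cong u v x y)
  have "Lp u = Lp v"
    by (rule Lp_inv) (simp add: perm_of_inv[OF be_cong.hyps])
  then show ?case using be_cong.IH by (simp add: lk_append)
next
  case (be_inv i b) then show ?case by (auto simp: perm_gen_def)
next
  case (be_comm i j) then show ?case by (auto simp: perm_gen_def)
next
  case (be_braid i) then show ?case by (auto simp: perm_gen_def)
qed auto

lemma be_mid: "braid_eq u v \<Longrightarrow> x @ u @ y = A \<Longrightarrow> x @ v @ y = B \<Longrightarrow> braid_eq A B"
  using be_cong by blast

lemma be_comm_word: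
  assumes "\<forall>k\<in>set x. snd k \<and> (fst k + 2 \<le> j \<or> j + 2 \<le> fst k)"
  shows "braid_eq ([(j,True)] @ x) (x @ [(j,True)])"
  using assms
proof (induction x)
  case Nil then show ?case by (simp add: be_refl)
next
  case (Cons y x)
  obtain k where y: "y = (k, True)" "k + 2 \<le> j \<or> j + 2 \<le> k" using Cons.prems by (cases y) auto
  have 1: "braid_eq [(j,True), (k,True)] [(k,True), (j,True)]"
    using y(2) be_comm be_sym by blast
  have "braid_eq ([(j,True)] @ y # x) (y # [(j,True)] @ x)"
    by (rule be_mid[OF 1, of "[]" x]) (simp_all add: y)
  moreover have "braid_eq (y # [(j,True)] @ x) (y # x @ [(j,True)])"
    by (rule be_mid[OF Cons.IH, of "[y]" "[]"]) (use Cons.prems in simp_all)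
  ultimately show ?case using be_trans by simp
qed

definition sgr :: "nat \<Rightarrow> nat \<Rightarrow> braid_word" where
  "sgr a b = map (\<lambda>k. (k, True)) [a..<b]"

definition pw :: "nat \<Rightarrow> braid_word \<Rightarrow> braid_word" where
  "pw k w = concat (replicate k w)"

lemma pw_simps[simp]: "pw 0 w = []" "pw (Suc k) w = w @ pw k w"
  by (simp_all add: pw_def)

lemma pw_add: "pw (a + b) w = pw a w @ pw b w"
  by (induction a) auto

lemma pw_mult: "pw p (pw r w) = pw (r * p) w"
  by (induction p) (auto simp: pw_add)

lemma perm_of_pw: "perm_of (pw k w) = perm_of w ^^ k"
  by (induction k) simp_all

lemma sgr_split: "a \<le> i \<Longrightarrow> Suc i < b \<Longrightarrow>
    sgr a b = sgr a i @ [(i,True), (Suc i, True)] @ sgr (Suc (Suc i)) b"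
proof -
  assume a: "a \<le> i" "Suc i < b"
  have "[a..<b] = [a..<i] @ [i..<b]"
    using upt_add_eq_append[of a i "b - i"] a by simp
  moreover have "[i..<b] = i # Suc i # [Suc (Suc i)..<b]"
    using a by (simp add: upt_conv_Cons)
  ultimately show ?thesis by (simp add: sgr_def)
qed

lemma L1: assumes "a \<le> i" "Suc i < b"
  shows "braid_eq (sgr a b @ [(i,True)]) ([(Suc i,True)] @ sgr a b)"
proof -
  let ?P = "sgr a i" and ?Q = "sgr (Suc (Suc i)) b"
  have c1: "braid_eq ([(i,True)] @ ?Q) (?Q @ [(i,True)])"
    by (rule be_comm_word) (auto simp: sgr_def)
  have c2: "braid_eq ([(Suc i,True)] @ ?P) (?P @ [(Suc i,True)])"
    by (rule be_comm_word) (auto simp: sgr_def)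
  have s1: "braid_eq (sgr a b @ [(i,True)]) (?P @ [(i,True), (Suc i, True), (i,True)] @ ?Q)"
    by (rule be_mid[OF be_sym[OF c1], of "?P @ [(i,True), (Suc i, True)]" "[]"])
      (simp_all add: sgr_split[OF assms])
  have s2: "braid_eq (?P @ [(i,True), (Suc i, True), (i,True)] @ ?Q)
       (?P @ [(Suc i,True), (i, True), (Suc i,True)] @ ?Q)"
    by (rule be_cong[OF be_braid])
  have s3: "braid_eq (?P @ [(Suc i,True), (i, True), (Suc i,True)] @ ?Q) ([(Suc i,True)] @ sgr a b)"
    by (rule be_mid[OF be_sym[OF c2], of "[]" "[(i, True), (Suc i,True)] @ ?Q"])
      (simp_all add: sgr_split[OF assms])
  show ?thesis using s1 s2 s3 be_trans by blast
qed

lemma sgr_Suc: "a \<le> b \<Longrightarrow> sgr a (Suc b) = sgr a b @ [(b,True)]"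
  by (simp add: sgr_def)

lemma L2: "braid_eq (sgr a (a + Suc n) @ sgr a (a + Suc n) @ [(a + n,True)])
                    ([(a,True)] @ sgr a (a + Suc n) @ sgr a (a + Suc n))"
proof (induction n)
  case 0
  show ?case by (simp add: sgr_def be_refl)
next
  case (Suc n)
  define c where "c = a + Suc n"
  let ?d1 = "sgr a (a + n)" and ?d' = "sgr a c"
  have d': "?d' = ?d1 @ [(a+n,True)]" by (simp add: c_def sgr_Suc)
  have d: "sgr a (a + Suc (Suc n)) = ?d' @ [(c,True)]" by (simp add: c_def sgr_Suc)
  have cm: "braid_eq ([(c,True)] @ ?d1) (?d1 @ [(c,True)])"
    by (rule be_comm_word) (auto simp: sgr_def c_def)
  have br: "braid_eq [(a+n,True), (c,True), (a+n,True)] [(c,True), (a+n,True), (c,True)]"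
    using be_braid[of "a+n"] by (simp add: c_def)
  have Q1: "braid_eq ((?d' @ [(c,True)]) @ (?d' @ [(c,True)])) (?d' @ ?d1 @ [(c,True),(a+n,True),(c,True)])"
    by (rule be_mid[OF cm, of ?d' "[(a+n,True),(c,True)]"]) (simp_all add: d')
  have Q2: "braid_eq (?d' @ ?d1 @ [(c,True),(a+n,True),(c,True)]) (?d' @ ?d' @ [(c,True),(a+n,True)])"
    by (rule be_mid[OF be_sym[OF br], of "?d' @ ?d1" "[]"]) (simp_all add: d')
  have Q: "braid_eq ((?d' @ [(c,True)]) @ (?d' @ [(c,True)])) (?d' @ ?d' @ [(c,True),(a+n,True)])"
    using Q1 Q2 be_trans by blast
  have R1: "braid_eq ((?d' @ [(c,True)]) @ (?d' @ [(c,True)]) @ [(c,True)])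
                     (?d' @ ?d' @ [(c,True),(a+n,True),(c,True)])"
    by (rule be_mid[OF Q, of "[]" "[(c,True)]"]) simp_all
  have R2: "braid_eq (?d' @ ?d' @ [(c,True),(a+n,True),(c,True)]) (?d' @ ?d' @ [(a+n,True)] @ [(c,True),(a+n,True)])"
    by (rule be_mid[OF be_sym[OF br], of "?d' @ ?d'" "[]"]) simp_all
  have IH: "braid_eq (?d' @ ?d' @ [(a+n,True)]) ([(a,True)] @ ?d' @ ?d')"
    using Suc.IH by (simp add: c_def)
  have R3: "braid_eq (?d' @ ?d' @ [(a+n,True)] @ [(c,True),(a+n,True)]) ([(a,True)] @ ?d' @ ?d' @ [(c,True),(a+n,True)])"
    by (rule be_mid[OF IH, of "[]" "[(c,True),(a+n,True)]"]) simp_all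
  have R4: "braid_eq ([(a,True)] @ ?d' @ ?d' @ [(c,True),(a+n,True)]) ([(a,True)] @ (?d' @ [(c,True)]) @ (?d' @ [(c,True)]))"
    by (rule be_mid[OF be_sym[OF Q], of "[(a,True)]" "[]"]) simp_all
  have "braid_eq ((?d' @ [(c,True)]) @ (?d' @ [(c,True)]) @ [(c,True)]) ([(a,True)] @ (?d' @ [(c,True)]) @ (?d' @ [(c,True)]))"
    using R1 R2 R3 R4 be_trans by blast
  then show ?case unfolding d by (simp add: c_def)
qed

lemma delta_pow: "k + 2 \<le> m \<Longrightarrow> braid_eq (pw k (sgr 0 (m - 1)) @ [(0,True)]) ([(k,True)] @ pw k (sgr 0 (m - 1)))"
proof (induction k)
  case 0 then show ?case by (simp add: be_refl)
next
  case (Suc k)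
  let ?d = "sgr 0 (m - 1)"
  have 1: "braid_eq (?d @ pw k ?d @ [(0,True)]) (?d @ [(k,True)] @ pw k ?d)"
    by (rule be_mid[OF Suc.IH, of ?d "[]"]) (use Suc.prems in simp_all)
  have 2: "braid_eq (?d @ [(k,True)] @ pw k ?d) ([(Suc k,True)] @ ?d @ pw k ?d)"
    by (rule be_mid[OF L1[of 0 k "m - 1"], of "[]" "pw k ?d"]) (use Suc.prems in simp_all)
  show ?case using 1 2 be_trans by simp
qed

lemma delta_central: assumes "2 \<le> m"
  shows "braid_eq (pw m (sgr 0 (m - 1)) @ [(0,True)]) ([(0,True)] @ pw m (sgr 0 (m - 1)))"
proof -
  let ?d = "sgr 0 (m - 1)"
  have pm: "pw m ?d = ?d @ ?d @ pw (m - 2) ?d"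
  proof -
    obtain n where "m = Suc (Suc n)" using assms by (metis add_2_eq_Suc le_Suc_ex)
    then show ?thesis by simp
  qed
  have 1: "braid_eq (?d @ ?d @ pw (m - 2) ?d @ [(0,True)]) (?d @ ?d @ [(m-2,True)] @ pw (m-2) ?d)"
    by (rule be_mid[OF delta_pow[of "m-2" m], of "?d @ ?d" "[]"]) (use assms in simp_all)
  have L: "braid_eq (?d @ ?d @ [(m-2,True)]) ([(0,True)] @ ?d @ ?d)"
    using L2[of 0 "m-2"] assms by (simp add: Suc_diff_Suc numeral_2_eq_2)
  have 2: "braid_eq (?d @ ?d @ [(m-2,True)] @ pw (m-2) ?d) ([(0,True)] @ ?d @ ?d @ pw (m-2) ?d)"
    by (rule be_mid[OF L, of "[]" "pw (m-2) ?d"]) simp_all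
  show ?thesis unfolding pm using 1 2 be_trans by simp
qed

definition D3 :: braid_word where "D3 = [(0,True),(1,True),(0,True)]"

lemma D3_central: "braid_eq (pw 2 D3 @ [(0,True)]) ([(0,True)] @ pw 2 D3)"
proof -
  have a: "braid_eq (D3 @ [(0,True)]) ([(1,True)] @ D3)"
    by (rule be_mid[OF be_braid[of 0], of "[]" "[(0,True)]"]) (simp_all add: D3_def)
  have b: "braid_eq (D3 @ [(1,True)]) ([(0,True)] @ D3)"
    by (rule be_mid[OF be_sym[OF be_braid[of 0]], of "[(0,True)]" "[]"]) (simp_all add: D3_def)
  have 1: "braid_eq (D3 @ D3 @ [(0,True)]) (D3 @ [(1,True)] @ D3)"
    by (rule be_mid[OF a, of D3 "[]"]) simp_all
  have 2: "braid_eq (D3 @ [(1,True)] @ D3) ([(0,True)] @ D3 @ D3)"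
    by (rule be_mid[OF b, of "[]" D3]) simp_all
  show ?thesis using 1 2 be_trans by (simp add: numeral_2_eq_2)
qed

definition chain :: "nat \<Rightarrow> nat \<Rightarrow> braid_word" where
  "chain n y = map (\<lambda>k. (k, True)) (rev [n..<y])"

lemma perm_chain: "n \<le> y \<Longrightarrow> perm_of (chain n y) n = y \<and> (\<forall>i<n. perm_of (chain n y) i = i)"
proof (induction y rule: dec_induct)
  case base then show ?case by (simp add: chain_def)
next
  case (step y)
  have "chain n (Suc y) = (y, True) # chain n y" using step.hyps by (simp add: chain_def)
  then show ?case using step by (auto simp: perm_gen_def)
qed

lemma realize_list: "distinct t \<Longrightarrow> \<exists>g. \<forall>i<length t. perm_of g i = t ! i"
proof (induction t rule: rev_induct)
  case Nil then show ?case by simp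
next
  case (snoc z t)
  then obtain g where g: "\<forall>i<length t. perm_of g i = t ! i" by auto
  let ?n = "length t"
  define y where "y = perm_of (invw g) z"
  have Fy: "perm_of g y = z" using perm_of_invw_right[of g] by (simp add: y_def fun_eq_iff)
  have yn: "?n \<le> y"
  proof (rule ccontr)
    assume "\<not> ?n \<le> y"
    then have "z = t ! y" using g Fy by auto
    then have "z \<in> set t" using \<open>\<not> ?n \<le> y\<close> by auto
    then show False using snoc.prems by simp
  qed
  have pc: "perm_of (chain ?n y) ?n = y" "\<forall>i<?n. perm_of (chain ?n y) i = i"
    using perm_chain[OF yn] by auto
  show ?case
  proof (intro exI allI impI)
    fix i assume "i < length (t @ [z])"
    then have "i < ?n \<or> i = ?n" by auto
    then show "perm_of (g @ chain ?n y) i = (t @ [z]) ! i"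
      using pc g Fy by (auto simp: nth_append)
  qed
qed

lemma conj_pw: "braid_eq (pw k (g @ E @ invw g)) (g @ pw k E @ invw g)"
proof (induction k)
  case 0 then show ?case using inv_right[of g] be_sym by simp
next
  case (Suc k)
  have 1: "braid_eq (g @ E @ invw g @ pw k (g @ E @ invw g)) (g @ E @ invw g @ g @ pw k E @ invw g)"
    by (rule be_mid[OF Suc.IH, of "g @ E @ invw g" "[]"]) simp_all
  have 2: "braid_eq (g @ E @ invw g @ g @ pw k E @ invw g) (g @ E @ [] @ pw k E @ invw g)"
    by (rule be_mid[OF inv_left[of g], of "g @ E" "pw k E @ invw g"]) simp_all
  show ?case using 1 2 be_trans by simp
qed

lemma comm_u:
  assumes "braid_eq (E @ [(0,True)]) ([(0,True)] @ E)"
  shows "braid_eq ([(0,True),(0,True)] @ E) (E @ [(0,True),(0,True)])"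
proof -
  have 1: "braid_eq ([(0,True)] @ [(0,True)] @ E) ([(0,True)] @ E @ [(0,True)])"
    by (rule be_mid[OF be_sym[OF assms], of "[(0,True)]" "[]"]) simp_all
  have 2: "braid_eq ([] @ ([(0,True)] @ E) @ [(0,True)]) ([] @ (E @ [(0,True)]) @ [(0,True)])"
    by (rule be_cong[OF be_sym[OF assms]])
  show ?thesis using 1 2 be_trans by simp
qed

lemma generic:
  fixes \<rho> :: "nat \<Rightarrow> nat"
  assumes memH: "\<And>x. perm_of x = \<rho> \<Longrightarrow> cls x \<in> H"
    and roots: "\<And>X X'. cls X \<in> H \<Longrightarrow> cls X' \<in> H \<Longrightarrow> braid_eq (pw p X) (pw p X') \<Longrightarrow> braid_eq X X'"
    and dist: "distinct t" "length t = m"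
    and supp: "\<And>x. \<rho> x \<noteq> x \<Longrightarrow> x \<in> set t"
    and eqv: "\<And>i. i < m \<Longrightarrow> \<rho> (t ! i) = t ! (perm_of D i)"
    and Cm: "\<And>i. i < m \<Longrightarrow> perm_of D i < m"
    and Cfix: "\<And>i. m \<le> i \<Longrightarrow> perm_of D i = i"
    and cent: "braid_eq (pw p D @ [(0,True)]) ([(0,True)] @ pw p D)"
    and C01: "\<not> ((perm_of D 0 = 0 \<and> perm_of D 1 = 1) \<or> (perm_of D 0 = 1 \<and> perm_of D 1 = 0))"
  shows False
proof -
  obtain g where g: "\<forall>i<m. perm_of g i = t ! i" using realize_list[OF dist(1)] dist(2) by auto
  let ?F = "perm_of g" and ?Fi = "perm_of (invw g)"
  have FFi: "?F (?Fi x) = x" for x using perm_of_invw_right[of g] by (simp add: fun_eq_iff)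
  have FiF: "?Fi (?F x) = x" for x using perm_of_invw_left[of g] by (simp add: fun_eq_iff)
  define u :: braid_word where "u = [(0,True),(0,True)]"
  define X where "X = g @ D @ invw g"
  define X' where "X' = g @ (u @ D @ invw u) @ invw g"
  have pX: "perm_of X = \<rho>"
  proof
    fix x
    define y where "y = ?Fi x"
    have Fy: "?F y = x" using FFi y_def by simp
    show "perm_of X x = \<rho> x"
    proof (cases "y < m")
      case True
      have "perm_of X x = ?F (perm_of D y)" by (simp add: X_def y_def)
      also have "\<dots> = t ! (perm_of D y)" using g Cm[OF True] by simp
      also have "\<dots> = \<rho> (t ! y)" using eqv[OF True] by simp
      also have "\<dots> = \<rho> x" using g True Fy by simp
      finally show ?thesis .
    next
      case False
      have "perm_of X x = x" using Cfix[of y] False Fy by (simp add: X_def y_def)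
      moreover have "\<rho> x = x"
      proof (rule ccontr)
        assume "\<rho> x \<noteq> x"
        then have "x \<in> set t" by (rule supp)
        then obtain j where j: "j < m" "t ! j = x" using dist(2) by (auto simp: in_set_conv_nth)
        then have "?F j = ?F y" using g Fy by simp
        then have "j = y" by (metis FiF)
        then show False using j False by simp
      qed
      ultimately show ?thesis by simp
    qed
  qed
  have pu: "perm_of u = id" "perm_of (invw u) = id"
    by (auto simp: u_def fun_eq_iff perm_gen_def)
  have pX': "perm_of X' = \<rho>"
    using pX unfolding X_def X'_def perm_of_append pu by simp
  have inX: "cls X \<in> H" and inX': "cls X' \<in> H" using memH pX pX' by auto
  have cu: "braid_eq (u @ pw p D) (pw p D @ u)" unfolding u_def by (rule comm_u[OF cent])
  have e1: "braid_eq (pw p X) (g @ pw p D @ invw g)" unfolding X_def by (rule conj_pw)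
  have e2: "braid_eq (pw p X') (g @ pw p (u @ D @ invw u) @ invw g)" unfolding X'_def by (rule conj_pw)
  have e3: "braid_eq (g @ pw p (u @ D @ invw u) @ invw g) (g @ (u @ pw p D @ invw u) @ invw g)"
    by (rule be_cong[OF conj_pw])
  have e4: "braid_eq (g @ (u @ pw p D) @ invw u @ invw g) (g @ (pw p D @ u) @ invw u @ invw g)"
    by (rule be_cong[OF cu])
  have e5: "braid_eq (g @ pw p D @ (u @ invw u) @ invw g) (g @ pw p D @ [] @ invw g)"
    using be_cong[OF inv_right[of u], of "g @ pw p D" "invw g"] by simp
  have e4': "braid_eq (g @ (u @ pw p D @ invw u) @ invw g) (g @ pw p D @ (u @ invw u) @ invw g)"
    using e4 by simp
  have e5': "braid_eq (g @ pw p D @ (u @ invw u) @ invw g) (g @ pw p D @ invw g)"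
    using e5 by simp
  have "braid_eq (pw p X') (pw p X)"
    using be_trans[OF be_trans[OF be_trans[OF e2 e3] e4'] e5'] be_sym[OF e1] be_trans by blast
  then have "braid_eq X X'" using roots[OF inX inX'] be_sym by blast
  then have a: "braid_eq (invw g @ X @ g) (invw g @ X' @ g)" by (rule be_cong)
  have b: "braid_eq (invw g @ X @ g) D"
  proof -
    have "braid_eq ((invw g @ g) @ D @ (invw g @ g)) ([] @ D @ [])"
      by (rule be_app[OF inv_left be_app[OF be_refl inv_left]])
    then show ?thesis by (simp add: X_def)
  qed
  have c: "braid_eq (invw g @ X' @ g) (u @ D @ invw u)"
  proof -
    have "braid_eq ((invw g @ g) @ (u @ D @ invw u) @ (invw g @ g)) ([] @ (u @ D @ invw u) @ [])"
      by (rule be_app[OF inv_left be_app[OF be_refl inv_left]])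
    then show ?thesis by (simp add: X'_def)
  qed
  have "braid_eq D (u @ D @ invw u)" using a b c by (meson be_sym be_trans)
  then have eq: "lk 0 1 D = lk 0 1 (u @ D @ invw u)" by (rule lk_inv)
  have Lpu: "Lp u = id" by (simp add: u_def fun_eq_iff)
  have nd: "\<not> ((Lp D 0 = 0 \<and> Lp D 1 = 1) \<or> (Lp D 0 = 1 \<and> Lp D 1 = 0))"
  proof
    assume h: "(Lp D 0 = 0 \<and> Lp D 1 = 1) \<or> (Lp D 0 = 1 \<and> Lp D 1 = 0)"
    have i: "perm_of D (Lp D x) = x" for x using Lp_perm(1)[of D] by (simp add: fun_eq_iff)
    from h show False
    proof
      assume "Lp D 0 = 0 \<and> Lp D 1 = 1"
      then have "perm_of D 0 = 0 \<and> perm_of D 1 = 1" using i[of 0] i[of 1] by simp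
      then show False using C01 by blast
    next
      assume "Lp D 0 = 1 \<and> Lp D 1 = 0"
      then have "perm_of D 1 = 0 \<and> perm_of D 0 = 1" using i[of 0] i[of 1] by simp
      then show False using C01 by blast
    qed
  qed
  have lkinv: "lk c d (invw u) = 0" if "\<not> ((c = 0 \<and> d = 1) \<or> (c = 1 \<and> d = 0))" for c d
    using that by (auto simp: u_def perm_gen_def)
  have "lk 0 1 (u @ D @ invw u) = 2 + lk 0 1 D"
    using lkinv[OF nd] by (simp add: lk_append Lpu) (simp add: u_def perm_gen_def)
  then show False using eq by simp
qed

lemma roots_from_order:
  fixes less :: "braid_word set \<Rightarrow> braid_word set \<Rightarrow> bool"
  assumes sg: "subgroup H braid_group"
    and irr: "\<forall>a\<in>H. \<not> less a a"
    and tr: "\<forall>a\<in>H. \<forall>b\<in>H. \<forall>c\<in>H. less a b \<longrightarrow> less b c \<longrightarrow> less a c"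
    and tot: "\<forall>a\<in>H. \<forall>b\<in>H. a \<noteq> b \<longrightarrow> less a b \<or> less b a"
    and inv: "\<forall>a\<in>H. \<forall>b\<in>H. \<forall>c\<in>H. less a b \<longrightarrow>
          less (c \<otimes>\<^bsub>braid_group\<^esub> a) (c \<otimes>\<^bsub>braid_group\<^esub> b) \<and> less (a \<otimes>\<^bsub>braid_group\<^esub> c) (b \<otimes>\<^bsub>braid_group\<^esub> c)"
    and X: "cls X \<in> H" "cls X' \<in> H" and pe: "braid_eq (pw p X) (pw p X')" and p: "1 \<le> p"
  shows "braid_eq X X'"
proof -
  have clo: "cls (pw (Suc k) A) \<in> H" if "cls A \<in> H" for A k
  proof (induction k)
    case 0 then show ?case using that by simp
  next
    case (Suc k)
    have "cls A \<otimes>\<^bsub>braid_group\<^esub> cls (pw (Suc k) A) \<in> H"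
      using subgroup.m_closed[OF sg that Suc.IH] .
    then show ?case by (simp add: mult_cls)
  qed
  have mono: "less (cls (pw (Suc k) A)) (cls (pw (Suc k) B))"
    if A: "cls A \<in> H" and B: "cls B \<in> H" and l: "less (cls A) (cls B)" for A B k
  proof (induction k)
    case 0 then show ?case using l by simp
  next
    case (Suc k)
    have 1: "less (cls A \<otimes>\<^bsub>braid_group\<^esub> cls (pw (Suc k) A)) (cls A \<otimes>\<^bsub>braid_group\<^esub> cls (pw (Suc k) B))"
      using inv clo[OF A, of k] clo[OF B, of k] A Suc.IH by blast
    have 2: "less (cls A \<otimes>\<^bsub>braid_group\<^esub> cls (pw (Suc k) B)) (cls B \<otimes>\<^bsub>braid_group\<^esub> cls (pw (Suc k) B))"
      using inv clo[OF B, of k] A B l by blast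
    have m1: "cls A \<otimes>\<^bsub>braid_group\<^esub> cls (pw (Suc k) A) \<in> H"
      using subgroup.m_closed[OF sg A clo[OF A, of k]] .
    have m2: "cls A \<otimes>\<^bsub>braid_group\<^esub> cls (pw (Suc k) B) \<in> H"
      using subgroup.m_closed[OF sg A clo[OF B, of k]] .
    have m3: "cls B \<otimes>\<^bsub>braid_group\<^esub> cls (pw (Suc k) B) \<in> H"
      using subgroup.m_closed[OF sg B clo[OF B, of k]] .
    have "less (cls A \<otimes>\<^bsub>braid_group\<^esub> cls (pw (Suc k) A)) (cls B \<otimes>\<^bsub>braid_group\<^esub> cls (pw (Suc k) B))"
      using tr m1 m2 m3 1 2 by blast
    then show ?case by (simp add: mult_cls)
  qed
  obtain k where pk: "p = Suc k" using p by (cases p) auto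
  have eqc: "cls (pw p X) = cls (pw p X')" using pe cls_eq by blast
  show ?thesis
  proof (rule ccontr)
    assume "\<not> braid_eq X X'"
    then have "cls X \<noteq> cls X'" using cls_eq by blast
    then have "less (cls X) (cls X') \<or> less (cls X') (cls X)" using tot X by blast
    then show False
    proof
      assume "less (cls X) (cls X')"
      then have "less (cls (pw p X)) (cls (pw p X'))" using mono X pk by blast
      then show False using irr eqc clo[OF X(1), of k] pk by auto
    next
      assume "less (cls X') (cls X)"
      then have "less (cls (pw p X')) (cls (pw p X))" using mono X pk by blast
      then show False using irr eqc clo[OF X(1), of k] pk by auto
    qed
  qed
qed


lemma dm: assumes "(s::nat) < r" shows "(q * r + s) div r = q" "(q * r + s) mod r = s"
proof -
  have r: "r \<noteq> 0" using assms by simp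
  show "(q * r + s) div r = q" using r assms by (simp add: add.commute[of "q * r"])
  show "(q * r + s) mod r = s" using r assms by (simp add: add.commute[of "q * r"])
qed

lemma fa: "(f ^^ a) ((f ^^ b) y) = (f ^^ (a + b)) y" by (simp add: funpow_add)

lemma perm_sgr: "perm_of (sgr 0 n) i = (if i < n then Suc i else if i = n then 0 else i)"
proof (induction n arbitrary: i)
  case 0 then show ?case by (simp add: sgr_def)
next
  case (Suc n)
  have "sgr 0 (Suc n) = sgr 0 n @ [(n, True)]" by (simp add: sgr_Suc)
  then show ?case using Suc by (auto simp: perm_gen_def)
qed

lemma perm_D3: "perm_of D3 0 = 2" "perm_of D3 1 = 1" "perm_of D3 (Suc 0) = Suc 0" "perm_of D3 2 = 0" "3 \<le> i \<Longrightarrow> perm_of D3 i = i"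
  by (auto simp: D3_def perm_gen_def)

context
  fixes \<rho> :: "nat \<Rightarrow> nat" and p :: nat
  assumes permr: "permutation \<rho>" and rp: "\<rho> ^^ p = id" and pp: "prime p"
begin

lemma p2: "2 \<le> p" using pp prime_ge_2_nat by blast

lemma injr: "inj (\<rho> ^^ k)"
  using permutation_bijective[OF permr] bij_is_inj inj_fn by blast

lemma rpq: "\<rho> ^^ (p * q) = id"
  using rp funpow_mult[where f=\<rho> and m=p and n=q] by simp

lemma fp: "\<rho> ^^ n = \<rho> ^^ (n mod p)"
proof -
  have "\<rho> ^^ n = \<rho> ^^ (n mod p + p * (n div p))" by simp
  also have "\<dots> = \<rho> ^^ (n mod p) \<circ> \<rho> ^^ (p * (n div p))" by (simp only: funpow_add)
  also have "\<dots> = \<rho> ^^ (n mod p)" using rpq by simp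
  finally show ?thesis .
qed

lemma fpx: "(\<rho> ^^ n) x = (\<rho> ^^ (n mod p)) x" using fp by metis

lemma backl: "(\<rho> ^^ (p * q - q)) ((\<rho> ^^ q) y) = y"
proof -
  have "(\<rho> ^^ (p * q - q)) ((\<rho> ^^ q) y) = (\<rho> ^^ (p * q - q + q)) y" by (rule fa)
  also have "p * q - q + q = p * q" using p2 by (simp add: mult_le_mono1 le_add_diff_inverse2 )
  finally show ?thesis using rpq by simp
qed

lemma orbit_free: assumes "\<rho> x \<noteq> x" "0 < k" "k < p" shows "(\<rho> ^^ k) x \<noteq> x"
proof
  assume h: "(\<rho> ^^ k) x = x"
  have all: "(\<rho> ^^ (k * q)) x = x" for q
  proof (induction q)
    case (Suc q)
    have "(\<rho> ^^ (k * Suc q)) x = (\<rho> ^^ k) ((\<rho> ^^ (k * q)) x)" by (simp add: funpow_add)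
    then show ?case using Suc h by simp
  qed simp
  have "coprime k p" using pp assms(2,3)
    by (metis coprime_commute less_not_refl2 nat_dvd_not_less prime_imp_coprime_nat)
  then have g: "gcd k p = 1" by simp
  obtain a b where "k * a = p * b + gcd k p" using bezout_nat[of k p] assms(2) by auto
  then have kab: "k * a = p * b + 1" using g by simp
  have "(\<rho> ^^ (k * a)) x = (\<rho> ^^ 1) ((\<rho> ^^ (p * b)) x)" unfolding kab fa by simp
  then have "(\<rho> ^^ (k * a)) x = \<rho> x" using rpq by simp
  then show False using all assms(1) by simp
qed

lemma supp_inv: assumes "\<rho> x \<noteq> x" shows "\<rho> ((\<rho> ^^ k) x) \<noteq> (\<rho> ^^ k) x"
proof
  assume "\<rho> ((\<rho> ^^ k) x) = (\<rho> ^^ k) x"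
  then have "(\<rho> ^^ k) (\<rho> x) = (\<rho> ^^ k) x" by (simp add: funpow_swap1)
  then show False using injr[of k] assms by (meson injD)
qed

definition Rr :: "nat set" where "Rr = {x. \<rho> x \<noteq> x \<and> (\<forall>k. x \<le> (\<rho> ^^ k) x)}"
definition Sl :: "nat list" where "Sl = sorted_list_of_set Rr"
definition tf :: "nat \<Rightarrow> nat" where "tf i = (\<rho> ^^ (i div length Sl)) (Sl ! (i mod length Sl))"

lemma finSupp: "finite {x. \<rho> x \<noteq> x}"
  using permutation_finite_support[OF permr] by simp

lemma finR: "finite Rr" using finSupp by (rule rev_finite_subset) (auto simp: Rr_def)

lemma setSl: "set Sl = Rr" "distinct Sl" using finR by (auto simp: Sl_def)

lemma Sl_nth: "s < length Sl \<Longrightarrow> Sl ! s \<in> Rr" using setSl nth_mem by blast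

lemma tf_supp: assumes "0 < length Sl" shows "\<rho> (tf i) \<noteq> tf i"
proof -
  have "Sl ! (i mod length Sl) \<in> Rr" using Sl_nth assms by simp
  then show ?thesis unfolding tf_def by (intro supp_inv) (auto simp: Rr_def)
qed

lemma same_orbit: assumes "x \<in> Rr" "x' \<in> Rr" "(\<rho> ^^ q) x = (\<rho> ^^ q') x'"
  shows "x = x'"
proof -
  have "x' = (\<rho> ^^ (p * q' - q')) ((\<rho> ^^ q') x')" using backl[of q' x'] by simp
  also have "\<dots> = (\<rho> ^^ (p * q' - q')) ((\<rho> ^^ q) x)" using assms(3) by simp
  also have "\<dots> = (\<rho> ^^ (p * q' - q' + q)) x" by (rule fa)
  finally have 1: "x' = (\<rho> ^^ (p * q' - q' + q)) x" .
  have "x = (\<rho> ^^ (p * q - q)) ((\<rho> ^^ q) x)" using backl[of q x] by simp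
  also have "\<dots> = (\<rho> ^^ (p * q - q)) ((\<rho> ^^ q') x')" using assms(3) by simp
  also have "\<dots> = (\<rho> ^^ (p * q - q + q')) x'" by (rule fa)
  finally have 2: "x = (\<rho> ^^ (p * q - q + q')) x'" .
  have "x \<le> x'" using 1 assms(1) unfolding Rr_def by auto
  moreover have "x' \<le> x" using 2 assms(2) unfolding Rr_def by auto
  ultimately show ?thesis by simp
qed

lemma cover: assumes "\<rho> y \<noteq> y" shows "\<exists>s<length Sl. \<exists>q<p. y = (\<rho> ^^ q) (Sl ! s)"
proof -
  define Ob where "Ob = (\<lambda>k. (\<rho> ^^ k) y) ` {..<p}"
  have fO: "finite Ob" by (simp add: Ob_def)
  have neO: "Ob \<noteq> {}" using p2 unfolding Ob_def by (metis empty_iff image_is_empty lessThan_iff not_numeral_le_zero not_gr_zero)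
  define x where "x = Min Ob"
  have "x \<in> Ob" using fO neO by (simp add: x_def)
  then obtain k0 where k0: "k0 < p" "x = (\<rho> ^^ k0) y" by (auto simp: Ob_def)
  have xR: "x \<in> Rr" unfolding Rr_def
  proof (intro CollectI conjI allI)
    show "\<rho> x \<noteq> x" using k0 supp_inv assms by simp
    fix k
    have "(\<rho> ^^ k) x = (\<rho> ^^ (k + k0)) y" using k0 fa by simp
    also have "\<dots> = (\<rho> ^^ ((k + k0) mod p)) y" by (rule fpx)
    finally have "(\<rho> ^^ k) x = (\<rho> ^^ ((k + k0) mod p)) y" .
    moreover have "(\<rho> ^^ ((k + k0) mod p)) y \<in> Ob" using p2 by (auto simp: Ob_def)
    ultimately show "x \<le> (\<rho> ^^ k) x" using fO by (simp add: x_def)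
  qed
  have "y = (\<rho> ^^ (p * k0 - k0)) x" using backl[of k0 y] k0 by simp
  then have yx: "y = (\<rho> ^^ ((p * k0 - k0) mod p)) x" using fpx by simp
  obtain s where s: "s < length Sl" "Sl ! s = x" using xR setSl by (metis in_set_conv_nth)
  have "(p * k0 - k0) mod p < p" using p2 by simp
  then show ?thesis using yx s by blast
qed

lemma tf_cover: assumes "\<rho> y \<noteq> y" shows "\<exists>i < length Sl * p. tf i = y"
proof -
  obtain s q where sq: "s < length Sl" "q < p" "y = (\<rho> ^^ q) (Sl ! s)" using cover[OF assms] by blast
  let ?r = "length Sl"
  define i where "i = q * ?r + s"
  have "i div ?r = q" "i mod ?r = s" using dm[OF sq(1)] by (simp_all add: i_def)
  moreover have "i < ?r * p"
  proof -
    have "i < q * ?r + ?r" using sq by (simp add: i_def)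
    also have "\<dots> = Suc q * ?r" by simp
    also have "\<dots> \<le> p * ?r" using sq by (intro mult_le_mono1) simp
    finally show ?thesis by (simp add: mult.commute)
  qed
  ultimately show ?thesis using sq by (auto simp: tf_def)
qed

lemma tf_inj: assumes "i < length Sl * p" "i' < length Sl * p" "tf i = tf i'" shows "i = i'"
proof -
  let ?r = "length Sl"
  have r0: "0 < ?r" using assms(1) by (cases ?r) auto
  define q s q' s' where "q = i div ?r" "s = i mod ?r" "q' = i' div ?r" "s' = i' mod ?r"
  have s: "s < ?r" "s' < ?r" using r0 by (simp_all add: q_s_q'_s'_def)
  have q: "q < p" "q' < p" using assms(1,2) r0
    by (simp_all add: q_s_q'_s'_def less_mult_imp_div_less mult.commute)
  have e: "(\<rho> ^^ q) (Sl ! s) = (\<rho> ^^ q') (Sl ! s')" using assms(3) by (simp add: tf_def q_s_q'_s'_def)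
  then have "Sl ! s = Sl ! s'" using same_orbit Sl_nth s by blast
  then have ss: "s = s'" using setSl(2) s nth_eq_iff_index_eq by blast
  have qq: "q = q'"
  proof (rule ccontr)
    assume "q \<noteq> q'"
    then consider "q < q'" | "q' < q" by linarith
    then show False
    proof cases
      case 1
      let ?z = "(\<rho> ^^ q) (Sl ! s)"
      have "(\<rho> ^^ (q' - q)) ?z = (\<rho> ^^ q') (Sl ! s)" using 1 by (simp add: fa)
      then have "(\<rho> ^^ (q' - q)) ?z = ?z" using e ss by simp
      moreover have "\<rho> ?z \<noteq> ?z" using Sl_nth[OF s(1)] supp_inv by (simp add: Rr_def)
      ultimately show False using orbit_free[of ?z "q' - q"] 1 q by simp
    next
      case 2
      let ?z = "(\<rho> ^^ q') (Sl ! s)"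
      have "(\<rho> ^^ (q - q')) ?z = (\<rho> ^^ q) (Sl ! s)" using 2 by (simp add: fa)
      then have "(\<rho> ^^ (q - q')) ?z = ?z" using e ss by simp
      moreover have "\<rho> ?z \<noteq> ?z" using Sl_nth[OF s(1)] supp_inv by (simp add: Rr_def)
      ultimately show False using orbit_free[of ?z "q - q'"] 2 q by simp
    qed
  qed
  show ?thesis using ss qq by (metis div_mult_mod_eq q_s_q'_s'_def)
qed

lemma tf_shift: assumes "i < length Sl * p"
  shows "\<rho> (tf i) = tf ((i + length Sl) mod (length Sl * p))"
proof -
  let ?r = "length Sl"
  have r0: "0 < ?r" using assms(1) by (cases ?r) auto
  define q s where "q = i div ?r" "s = i mod ?r"
  have s: "s < ?r" using r0 by (simp add: q_s_def)
  have q: "q < p" using assms r0 by (simp add: q_s_def less_mult_imp_div_less mult.commute)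
  have i: "i = q * ?r + s" by (simp add: q_s_def)
  have lhs: "\<rho> (tf i) = (\<rho> ^^ Suc q) (Sl ! s)" by (simp add: tf_def q_s_def)
  show ?thesis
  proof (cases "Suc q < p")
    case True
    have "i + ?r < ?r * p"
    proof -
      have "i + ?r = Suc q * ?r + s" using i by simp
      also have "\<dots> < Suc q * ?r + ?r" using s by simp
      also have "\<dots> = Suc (Suc q) * ?r" by simp
      also have "\<dots> \<le> p * ?r" using True by (intro mult_le_mono1) simp
      finally show ?thesis by (simp add: mult.commute)
    qed
    then have "(i + ?r) mod (?r * p) = Suc q * ?r + s" using i by simp
    moreover have "(Suc q * ?r + s) div ?r = Suc q" "(Suc q * ?r + s) mod ?r = s"
      using s dm by blast+
    ultimately show ?thesis using lhs by (simp add: tf_def)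
  next
    case False
    then have qp: "Suc q = p" using q by simp
    have "i + ?r = ?r * p + s" using i unfolding qp[symmetric] by (simp add: algebra_simps)
    moreover have "s < ?r * p"
    proof -
      have "?r \<le> ?r * p" using p2 by simp
      then show ?thesis using s by linarith
    qed
    ultimately have "(i + ?r) mod (?r * p) = s" by simp
    moreover have "tf s = Sl ! s" using s by (simp add: tf_def)
    moreover have "(\<rho> ^^ Suc q) (Sl ! s) = Sl ! s" using qp rp by simp
    ultimately show ?thesis using lhs by simp
  qed
qed

lemma construct: assumes "\<rho> \<noteq> id"
  shows "\<exists>D m t. distinct t \<and> length t = m \<and> (\<forall>x. \<rho> x \<noteq> x \<longrightarrow> x \<in> set t)
    \<and> (\<forall>i<m. \<rho> (t ! i) = t ! (perm_of D i)) \<and> (\<forall>i<m. perm_of D i < m)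
    \<and> (\<forall>i. m \<le> i \<longrightarrow> perm_of D i = i)
    \<and> braid_eq (pw p D @ [(0,True)]) ([(0,True)] @ pw p D)
    \<and> \<not> ((perm_of D 0 = 0 \<and> perm_of D 1 = 1) \<or> (perm_of D 0 = 1 \<and> perm_of D 1 = 0))"
proof -
  let ?r = "length Sl"
  define m0 where "m0 = ?r * p"
  define t0 where "t0 = map tf [0..<m0]"
  obtain y where y: "\<rho> y \<noteq> y" using assms by (auto simp: fun_eq_iff)
  obtain i0 where "i0 < m0" using tf_cover[OF y] m0_def by blast
  then have r0: "0 < ?r" by (cases ?r) (auto simp: m0_def)
  have d0: "distinct t0" unfolding t0_def distinct_map
    using tf_inj by (auto simp: inj_on_def m0_def)
  have s0: "\<rho> x \<noteq> x \<Longrightarrow> x \<in> set t0" for x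
    using tf_cover[of x] by (auto simp: t0_def m0_def)
  have l0: "length t0 = m0" by (simp add: t0_def)
  show ?thesis
  proof (cases "3 \<le> m0")
    case True
    define dl where "dl = sgr 0 (m0 - 1)"
    define D where "D = pw ?r dl"
    have Cd: "perm_of dl i = (if i < m0 then Suc i mod m0 else i)" for i
      using True by (auto simp: dl_def perm_sgr)
    have Ck: "(perm_of dl ^^ k) i = (if i < m0 then (i + k) mod m0 else i)" for k i
    proof (induction k)
      case (Suc k)
      have "(perm_of dl ^^ Suc k) i = perm_of dl ((perm_of dl ^^ k) i)" by simp
      then show ?case using Suc True by (auto simp: Cd mod_Suc_eq)
    qed simp
    have CD: "perm_of D i = (if i < m0 then (i + ?r) mod m0 else i)" for i
      by (simp add: D_def perm_of_pw Ck)
    have rm: "?r < m0" using p2 r0 by (simp add: m0_def)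
    show ?thesis
    proof (intro exI conjI allI impI)
      show "distinct t0" "length t0 = m0" by (fact d0) (fact l0)
      show "x \<in> set t0" if "\<rho> x \<noteq> x" for x using s0 that .
      fix i assume i: "i < m0"
      have lt: "(i + ?r) mod m0 < m0" using True by simp
      show "\<rho> (t0 ! i) = t0 ! perm_of D i"
        using tf_shift[of i] i lt by (simp add: t0_def CD m0_def)
      show "perm_of D i < m0" using i True by (simp add: CD)
    next
      fix i assume "m0 \<le> i" then show "perm_of D i = i" by (simp add: CD)
    next
      have "pw p D = pw m0 dl" by (simp add: D_def pw_mult m0_def)
      then show "braid_eq (pw p D @ [(0,True)]) ([(0,True)] @ pw p D)"
        using delta_central[of m0] True by (simp add: dl_def)
    next
      show "\<not> ((perm_of D 0 = 0 \<and> perm_of D 1 = 1) \<or> (perm_of D 0 = 1 \<and> perm_of D 1 = 0))"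
      proof
        assume h: "(perm_of D 0 = 0 \<and> perm_of D 1 = 1) \<or> (perm_of D 0 = 1 \<and> perm_of D 1 = 0)"
        have "perm_of D 0 = ?r" using rm True by (simp add: CD)
        then have "?r = 1" using h r0 by auto
        moreover have "perm_of D 1 = (1 + ?r) mod m0" using True by (simp add: CD)
        ultimately have "perm_of D 1 = 2" using True by simp
        then show False using h by simp
      qed
    qed
  next
    case False
    have "?r * p < 3" using False m0_def by simp
    then have rp3: "?r * p < 3" .
    have r1: "?r = 1"
    proof (rule ccontr)
      assume "?r \<noteq> 1"
      then have "2 \<le> ?r" using r0 by linarith
      then have "2 * 2 \<le> ?r * p" using p2 by (intro mult_le_mono) auto
      then show False using rp3 by simp
    qed
    have pt: "p = 2" using rp3 r1 p2 by simp
    have m2: "m0 = 2" using r1 pt m0_def by simp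
    obtain c where c: "c \<notin> {x. \<rho> x \<noteq> x}" using finSupp ex_new_if_finite infinite_UNIV_nat by blast
    then have rc: "\<rho> c = c" by simp
    have tf0: "\<rho> (tf 0) = tf 1" using tf_shift[of 0] r1 pt by simp
    have tf1: "\<rho> (tf 1) = tf 0" using tf_shift[of 1] r1 pt by simp
    have n0: "\<rho> (tf 0) \<noteq> tf 0" and n1: "\<rho> (tf 1) \<noteq> tf 1" using tf_supp r0 by auto
    define t where "t = [tf 0, c, tf 1]"
    have t0e: "t0 = [tf 0, tf 1]" using m2 by (simp add: t0_def upt_conv_Cons)
    show ?thesis
    proof (intro exI conjI allI impI)
      show "distinct t" using n0 n1 rc tf0 by (auto simp: t_def)
      show "length t = 3" by (simp add: t_def)
      show "x \<in> set t" if "\<rho> x \<noteq> x" for x using s0[OF that] by (auto simp: t_def t0e)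
      fix i assume i: "i < (3::nat)"
      then have "i = 0 \<or> i = 1 \<or> i = 2" by auto
      then show "\<rho> (t ! i) = t ! perm_of D3 i" "perm_of D3 i < 3"
        using tf0 tf1 rc by (auto simp: t_def perm_D3)
    next
      fix i :: nat assume "3 \<le> i" then show "perm_of D3 i = i" by (rule perm_D3)
    next
      show "braid_eq (pw p D3 @ [(0,True)]) ([(0,True)] @ pw p D3)" using D3_central pt by simp
    next
      show "\<not> ((perm_of D3 0 = 0 \<and> perm_of D3 1 = 1) \<or> (perm_of D3 0 = 1 \<and> perm_of D3 1 = 0))"
        by (simp add: perm_D3)
    qed
  qed
qed

end

theorem mainTheorem13:
  assumes "subgroup H braid_group"
    and "pure_braids \<subset> H"
  shows "\<not> bi_orderable (braid_group\<lparr>carrier := H\<rparr>)"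
proof
  assume "bi_orderable (braid_group\<lparr>carrier := H\<rparr>)"
  then have "\<exists>less :: braid_word set \<Rightarrow> braid_word set \<Rightarrow> bool.
      (\<forall>a\<in>H. \<not> less a a) \<and>
      (\<forall>a\<in>H. \<forall>b\<in>H. \<forall>c\<in>H. less a b \<longrightarrow> less b c \<longrightarrow> less a c) \<and>
      (\<forall>a\<in>H. \<forall>b\<in>H. a \<noteq> b \<longrightarrow> less a b \<or> less b a) \<and>
      (\<forall>a\<in>H. \<forall>b\<in>H. \<forall>c\<in>H. less a b \<longrightarrow>
          less (c \<otimes>\<^bsub>braid_group\<^esub> a) (c \<otimes>\<^bsub>braid_group\<^esub> b) \<and> less (a \<otimes>\<^bsub>braid_group\<^esub> c) (b \<otimes>\<^bsub>braid_group\<^esub> c))"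
  proof -
    have ca: "carrier (braid_group\<lparr>carrier := H\<rparr>) = H" by simp
    have mu: "monoid.mult (braid_group\<lparr>carrier := H\<rparr>) = monoid.mult braid_group" by simp
    show ?thesis using \<open>bi_orderable (braid_group\<lparr>carrier := H\<rparr>)\<close>
      unfolding bi_orderable_def ca mu .
  qed
  then obtain less :: "braid_word set \<Rightarrow> braid_word set \<Rightarrow> bool" where L: "(\<forall>a\<in>H. \<not> less a a) \<and>
      (\<forall>a\<in>H. \<forall>b\<in>H. \<forall>c\<in>H. less a b \<longrightarrow> less b c \<longrightarrow> less a c) \<and>
      (\<forall>a\<in>H. \<forall>b\<in>H. a \<noteq> b \<longrightarrow> less a b \<or> less b a) \<and>
      (\<forall>a\<in>H. \<forall>b\<in>H. \<forall>c\<in>H. less a b \<longrightarrow>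
          less (c \<otimes>\<^bsub>braid_group\<^esub> a) (c \<otimes>\<^bsub>braid_group\<^esub> b) \<and> less (a \<otimes>\<^bsub>braid_group\<^esub> c) (b \<otimes>\<^bsub>braid_group\<^esub> c))"
    by (rule exE)
  note irr = conjunct1[OF L]
  note tr = conjunct1[OF conjunct2[OF L]]
  note tot = conjunct1[OF conjunct2[OF conjunct2[OF L]]]
  note inv = conjunct2[OF conjunct2[OF conjunct2[OF L]]]
  have sg: "subgroup H braid_group" by (rule assms(1))
  obtain c where c: "c \<in> H" "c \<notin> pure_braids" using assms(2) by blast
  have "c \<in> carrier braid_group" using subgroup.subset[OF sg] c by blast
  then obtain w0 where w0: "c = cls w0" using carrier_iff by blast
  define \<pi> where "\<pi> = perm_of w0"
  have pin: "\<pi> \<noteq> id"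
  proof
    assume "\<pi> = id"
    then have "\<forall>w\<in>c. perm_of w = id" using w0 by (auto simp: mem_cls \<pi>_def) (metis perm_of_inv)
    then have "c \<in> pure_braids" using \<open>c \<in> carrier braid_group\<close> by (simp add: pure_braids_def)
    then show False using c by simp
  qed
  have powH: "cls (pw k w0) \<in> H" for k
  proof (induction k)
    case 0 then show ?case using subgroup.one_closed[OF sg] one_cls by simp
  next
    case (Suc k)
    have "cls w0 \<otimes>\<^bsub>braid_group\<^esub> cls (pw k w0) \<in> H"
      using subgroup.m_closed[OF sg] c w0 Suc.IH by blast
    then show ?case by (simp add: mult_cls)
  qed
  have memH: "cls x \<in> H" if "perm_of x = \<pi> ^^ k" for x k
  proof -
    let ?y = "pw k w0"
    have py: "perm_of ?y = \<pi> ^^ k" by (simp add: perm_of_pw \<pi>_def)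
    have "perm_of (invw ?y @ x) = id"
      using perm_of_invw_left[of ?y] that py by simp
    then have "\<forall>w\<in>cls (invw ?y @ x). perm_of w = id"
    proof (intro ballI)
      fix w assume "perm_of (invw ?y @ x) = id" "w \<in> cls (invw ?y @ x)"
      then show "perm_of w = id" using perm_of_inv mem_cls by metis
    qed
    then have "cls (invw ?y @ x) \<in> pure_braids" by (auto simp: pure_braids_def carrier_iff)
    then have "cls (invw ?y @ x) \<in> H" using assms(2) by blast
    then have "cls ?y \<otimes>\<^bsub>braid_group\<^esub> cls (invw ?y @ x) \<in> H"
      using subgroup.m_closed[OF sg] powH by blast
    moreover have "cls (?y @ invw ?y @ x) = cls x"
    proof -
      have "braid_eq ((?y @ invw ?y) @ x) ([] @ x)" by (rule be_app[OF inv_right be_refl])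
      then show ?thesis using cls_eq by simp
    qed
    ultimately show ?thesis by (simp add: mult_cls)
  qed
  obtain n where n: "(\<pi> ^^ n) = id" "n > 0"
    using permutation_is_nilpotent[OF permutation_perm_of[of w0]] \<pi>_def by metis
  define n0 where "n0 = (LEAST n. 0 < n \<and> \<pi> ^^ n = id)"
  have n0: "0 < n0" "\<pi> ^^ n0 = id" using LeastI[of "\<lambda>n. 0 < n \<and> \<pi> ^^ n = id" n] n
    by (auto simp: n0_def)
  have n0min: "\<pi> ^^ k \<noteq> id" if "0 < k" "k < n0" for k
    using not_less_Least[of k "\<lambda>n. 0 < n \<and> \<pi> ^^ n = id"] that by (auto simp: n0_def)
  have "n0 \<noteq> 1" using n0 pin by auto
  then obtain p where p: "prime p" "p dvd n0" using prime_factor_nat by blast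
  define j where "j = n0 div p"
  have p2: "2 \<le> p" using p prime_ge_2_nat by blast
  have nj: "n0 = j * p" using p by (simp add: j_def)
  have j0: "0 < j" using nj n0 by (cases j) auto
  have jn: "j < n0" using nj p2 j0 by simp
  define \<rho> where "\<rho> = \<pi> ^^ j"
  have rn: "\<rho> \<noteq> id" using n0min[OF j0 jn] \<rho>_def by simp
  have rp: "\<rho> ^^ p = id" using n0 nj by (simp add: \<rho>_def funpow_mult)
  have permr: "permutation \<rho>"
    using permutation_perm_of[of "pw j w0"] by (simp add: perm_of_pw \<rho>_def \<pi>_def)
  obtain D m t where
    dist: "distinct t" "length t = m" and supp: "\<forall>x. \<rho> x \<noteq> x \<longrightarrow> x \<in> set t"
    and eqv: "\<forall>i<m. \<rho> (t ! i) = t ! (perm_of D i)" and Cm: "\<forall>i<m. perm_of D i < m"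
    and Cfix: "\<forall>i. m \<le> i \<longrightarrow> perm_of D i = i"
    and cent: "braid_eq (pw p D @ [(0,True)]) ([(0,True)] @ pw p D)"
    and C01: "\<not> ((perm_of D 0 = 0 \<and> perm_of D 1 = 1) \<or> (perm_of D 0 = 1 \<and> perm_of D 1 = 0))"
    using construct[OF permr rp p(1) rn] by blast
  have roots: "braid_eq X X'" if "cls X \<in> H" "cls X' \<in> H" "braid_eq (pw p X) (pw p X')" for X X'
    using roots_from_order[OF sg irr tr tot inv that] p2 by simp
  show False
  proof (rule generic[of \<rho> H p t m D])
    show "cls x \<in> H" if "perm_of x = \<rho>" for x using memH[of x j] that \<rho>_def by simp
    show "braid_eq X X'" if "cls X \<in> H" "cls X' \<in> H" "braid_eq (pw p X) (pw p X')" for X X'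
      using roots that by simp
    show "distinct t" "length t = m" by (fact dist(1)) (fact dist(2))
    show "x \<in> set t" if "\<rho> x \<noteq> x" for x using supp that by simp
    show "\<rho> (t ! i) = t ! perm_of D i" if "i < m" for i using eqv that by simp
    show "perm_of D i < m" if "i < m" for i using Cm that by simp
    show "perm_of D i = i" if "m \<le> i" for i using Cfix that by simp
    show "braid_eq (pw p D @ [(0, True)]) ([(0, True)] @ pw p D)" by (fact cent)
    show "\<not> ((perm_of D 0 = 0 \<and> perm_of D 1 = 1) \<or> (perm_of D 0 = 1 \<and> perm_of D 1 = 0))" by (fact C01)
  qed
qed

end
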